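(* Let $T$ be a tournament whose strong components are $D_1,\ldots,D_k$, for some positive integer $k$, and let $\mathcal{X}\in\{g,P_3^*\}$. Then $$\overrightarrow{in}_{\mathcal{X}}(T)=\sum_{i=1}^k\overrightarrow{in}_{\mathcal{X}}(D_i)\quad\text{and}\quad \overrightarrow{hn}_{\mathcal{X}}(T)=\sum_{i=1}^k\overrightarrow{hn}_{\mathcal{X}}(D_i).$$ In particular, if $\ell\le k$ of the strong components are non-trivial (have more than one vertex), then $\overrightarrow{hn}_{P_3^*}(T)=\overrightarrow{hn}_{g}(T)=|\mathrm{Ext}(T)|+2\ell$.
   Context: A tournament is an orientation of a complete graph; its strong components are its maximal strongly connected subdigraphs (each $D_i$ is considered as the induced sub-tournament). For an oriented graph $D$: the geodetic interval function $I_g(u,v)$ is the set of vertices on some shortest directed $(u,v)$-path or some shortest directed $(v,u)$-path; the distance-two interval function $I_{P_3^*}(u,v)$ is $\{u,v\}$ together with all vertices $w$ with $(u,w),(w,v)\in A(D)$ and $(u,v)\notin A(D)$, or $(v,w),(w,u)\in A(D)$ and $(v,u)\notin A(D)$. For an interval function $I$ and $S\subseteq V(D)$, $I(S)=\bigcup_{u,v\in S}I(u,v)$; $C$ is convex if $I(C)=C$; the convex hull of $S$ is the smallest convex set containing $S$. An interval set is $S$ with $I(S)=V(D)$ and a hull set is $S$ with convex hull $V(D)$; $\overrightarrow{in}_{\mathcal{X}}(D)$ and $\overrightarrow{hn}_{\mathcal{X}}(D)$ are the minimum sizes of an interval set and of a hull set for $I_{\mathcal{X}}$. A vertex $v$ is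 transitive if whenever $(u,v),(v,w)\in A(D)$ we have $(u,w)\in A(D)$; $v$ is extreme if it is a source, a sink, or transitive; $\mathrm{Ext}(D)$ denotes the set of extreme vertices of $D$. *)

theory Defs
  imports Main
begin

text \<open>An oriented graph / digraph is given by a vertex set V and an arc set A
  (arcs outside V x V are ignored where relevant; for a tournament A \<subseteq> V x V).\<close>

definition tournament :: "'a set \<Rightarrow> ('a \<times> 'a) set \<Rightarrow> bool" where
  "tournament V A \<longleftrightarrow> finite V \<and> A \<subseteq> V \<times> V \<and> (\<forall>v. (v, v) \<notin> A) \<and>
     (\<forall>u\<in>V. \<forall>v\<in>V. u \<noteq> v \<longrightarrow> ((u, v) \<in> A \<longleftrightarrow> (v, u) \<notin> A))"

definition induced_arcs :: "('a \<times> 'a) set \<Rightarrow> 'a set \<Rightarrow> ('a \<times> 'a) set" where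
  "induced_arcs A S = A \<inter> (S \<times> S)"

definition strongly_connected :: "'a set \<Rightarrow> ('a \<times> 'a) set \<Rightarrow> bool" where
  "strongly_connected S A \<longleftrightarrow> S \<noteq> {} \<and>
     (\<forall>u\<in>S. \<forall>v\<in>S. (u, v) \<in> (induced_arcs A S)\<^sup>*)"

definition strong_components :: "'a set \<Rightarrow> ('a \<times> 'a) set \<Rightarrow> 'a set set" where
  "strong_components V A = {S. S \<subseteq> V \<and> strongly_connected S A \<and>
     (\<forall>S'. S \<subseteq> S' \<and> S' \<subseteq> V \<and> strongly_connected S' A \<longrightarrow> S' = S)}"

definition dpath :: "'a set \<Rightarrow> ('a \<times> 'a) set \<Rightarrow> 'a list \<Rightarrow> bool" where
  "dpath V A p \<longleftrightarrow> p \<noteq> [] \<and> set p \<subseteq> V \<and> distinct p \<and>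
     (\<forall>i. Suc i < length p \<longrightarrow> (p ! i, p ! Suc i) \<in> A)"

definition shortest_dpath :: "'a set \<Rightarrow> ('a \<times> 'a) set \<Rightarrow> 'a \<Rightarrow> 'a \<Rightarrow> 'a list \<Rightarrow> bool" where
  "shortest_dpath V A u v p \<longleftrightarrow> dpath V A p \<and> hd p = u \<and> last p = v \<and>
     (\<forall>q. dpath V A q \<and> hd q = u \<and> last q = v \<longrightarrow> length p \<le> length q)"

definition Ig :: "'a set \<Rightarrow> ('a \<times> 'a) set \<Rightarrow> 'a \<Rightarrow> 'a \<Rightarrow> 'a set" where
  "Ig V A u v = {w. \<exists>p. (shortest_dpath V A u v p \<or> shortest_dpath V A v u p) \<and> w \<in> set p}"

definition IP3 :: "'a set \<Rightarrow> ('a \<times> 'a) set \<Rightarrow> 'a \<Rightarrow> 'a \<Rightarrow> 'a set" where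
  "IP3 V A u v = {u, v} \<union>
     {w\<in>V. ((u, w) \<in> A \<and> (w, v) \<in> A \<and> (u, v) \<notin> A) \<or>
           ((v, w) \<in> A \<and> (w, u) \<in> A \<and> (v, u) \<notin> A)}"

type_synonym 'a intfun = "'a set \<Rightarrow> ('a \<times> 'a) set \<Rightarrow> 'a \<Rightarrow> 'a \<Rightarrow> 'a set"

definition Iset :: "'a intfun \<Rightarrow> 'a set \<Rightarrow> ('a \<times> 'a) set \<Rightarrow> 'a set \<Rightarrow> 'a set" where
  "Iset I V A S = (\<Union>u\<in>S. \<Union>v\<in>S. I V A u v)"

definition convex :: "'a intfun \<Rightarrow> 'a set \<Rightarrow> ('a \<times> 'a) set \<Rightarrow> 'a set \<Rightarrow> bool" where
  "convex I V A C \<longleftrightarrow> C \<subseteq> V \<and> Iset I V A C = C"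

definition convex_hull :: "'a intfun \<Rightarrow> 'a set \<Rightarrow> ('a \<times> 'a) set \<Rightarrow> 'a set \<Rightarrow> 'a set" where
  "convex_hull I V A S = \<Inter>{C. S \<subseteq> C \<and> convex I V A C}"

definition interval_set :: "'a intfun \<Rightarrow> 'a set \<Rightarrow> ('a \<times> 'a) set \<Rightarrow> 'a set \<Rightarrow> bool" where
  "interval_set I V A S \<longleftrightarrow> S \<subseteq> V \<and> Iset I V A S = V"

definition hull_set :: "'a intfun \<Rightarrow> 'a set \<Rightarrow> ('a \<times> 'a) set \<Rightarrow> 'a set \<Rightarrow> bool" where
  "hull_set I V A S \<longleftrightarrow> S \<subseteq> V \<and> convex_hull I V A S = V"

definition interval_number :: "'a intfun \<Rightarrow> 'a set \<Rightarrow> ('a \<times> 'a) set \<Rightarrow> nat" where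
  "interval_number I V A = (LEAST n. \<exists>S. interval_set I V A S \<and> card S = n)"

definition hull_number :: "'a intfun \<Rightarrow> 'a set \<Rightarrow> ('a \<times> 'a) set \<Rightarrow> nat" where
  "hull_number I V A = (LEAST n. \<exists>S. hull_set I V A S \<and> card S = n)"

definition is_source :: "'a set \<Rightarrow> ('a \<times> 'a) set \<Rightarrow> 'a \<Rightarrow> bool" where
  "is_source V A v \<longleftrightarrow> (\<forall>u\<in>V. (u, v) \<notin> A)"

definition is_sink :: "'a set \<Rightarrow> ('a \<times> 'a) set \<Rightarrow> 'a \<Rightarrow> bool" where
  "is_sink V A v \<longleftrightarrow> (\<forall>w\<in>V. (v, w) \<notin> A)"

definition is_transitive_vertex :: "'a set \<Rightarrow> ('a \<times> 'a) set \<Rightarrow> 'a \<Rightarrow> bool" where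
  "is_transitive_vertex V A v \<longleftrightarrow>
     (\<forall>u\<in>V. \<forall>w\<in>V. (u, v) \<in> A \<and> (v, w) \<in> A \<longrightarrow> (u, w) \<in> A)"

definition Ext :: "'a set \<Rightarrow> ('a \<times> 'a) set \<Rightarrow> 'a set" where
  "Ext V A = {v\<in>V. is_source V A v \<or> is_sink V A v \<or> is_transitive_vertex V A v}"

end

theory Submission
  imports Defs
begin


definition good :: "'a intfun \<Rightarrow> 'a set \<Rightarrow> ('a \<times> 'a) set \<Rightarrow> bool" where
  "good I V A \<longleftrightarrow> (\<forall>u\<in>V. \<forall>v\<in>V. I V A u v \<subseteq> V) \<and> (\<forall>u\<in>V. u \<in> I V A u u)"

lemma Iset_sub: "good I V A \<Longrightarrow> S \<subseteq> V \<Longrightarrow> Iset I V A S \<subseteq> V"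
  unfolding good_def Iset_def by blast

lemma Iset_sup: "good I V A \<Longrightarrow> S \<subseteq> V \<Longrightarrow> S \<subseteq> Iset I V A S"
  unfolding good_def Iset_def by blast

lemma Iset_mono: "S \<subseteq> T \<Longrightarrow> Iset I V A S \<subseteq> Iset I V A T"
  unfolding Iset_def by blast

lemma convex_V: "good I V A \<Longrightarrow> convex I V A V"
  unfolding convex_def using Iset_sub[of I V A V] Iset_sup[of I V A V] by auto

lemma hull_sup: "S \<subseteq> convex_hull I V A S"
  unfolding convex_hull_def by blast

lemma hull_least: "convex I V A C \<Longrightarrow> S \<subseteq> C \<Longrightarrow> convex_hull I V A S \<subseteq> C"
  unfolding convex_hull_def by blast

lemma hull_sub': "good I V A \<Longrightarrow> S \<subseteq> V \<Longrightarrow> convex_hull I V A S \<subseteq> V"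
  using hull_least[OF convex_V] by metis

lemma hull_closed: "u \<in> convex_hull I V A S \<Longrightarrow> v \<in> convex_hull I V A S \<Longrightarrow>
   I V A u v \<subseteq> convex_hull I V A S"
  unfolding convex_hull_def convex_def Iset_def by blast

lemma hull_convex: "good I V A \<Longrightarrow> S \<subseteq> V \<Longrightarrow> convex I V A (convex_hull I V A S)"
proof -
  assume g: "good I V A" and s: "S \<subseteq> V"
  have 1: "convex_hull I V A S \<subseteq> V" using hull_sub'[OF g s] .
  have "Iset I V A (convex_hull I V A S) \<subseteq> convex_hull I V A S"
    unfolding Iset_def using hull_closed[of _ I V A S] by (intro UN_least) auto
  moreover have "convex_hull I V A S \<subseteq> Iset I V A (convex_hull I V A S)"
    using Iset_sup[OF g 1] .
  ultimately show ?thesis using 1 unfolding convex_def by blast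
qed

lemma exit_lemma:
  assumes "(a, b) \<in> R\<^sup>*" "a \<in> P" "b \<notin> P"
  shows "\<exists>p q. p \<in> P \<and> q \<notin> P \<and> (p, q) \<in> R"
  using assms
proof (induction rule: rtrancl_induct)
  case base then show ?case by simp
next
  case (step y z)
  then show ?case by (cases "y \<in> P") auto
qed

definition scc :: "('a \<times> 'a) set \<Rightarrow> 'a \<Rightarrow> 'a set" where
  "scc A v = {x. (v, x) \<in> A\<^sup>* \<and> (x, v) \<in> A\<^sup>*}"

lemma comp_self: "v \<in> scc A v" unfolding scc_def by simp

lemma rtrancl_in_V: "(v, x) \<in> A\<^sup>* \<Longrightarrow> A \<subseteq> V \<times> V \<Longrightarrow> v \<in> V \<Longrightarrow> x \<in> V"
  by (induction rule: rtrancl_induct) auto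

lemma comp_sub: "A \<subseteq> V \<times> V \<Longrightarrow> v \<in> V \<Longrightarrow> scc A v \<subseteq> V"
  unfolding scc_def using rtrancl_in_V[of v _ A V] by blast

lemma comp_eq: "x \<in> scc A v \<Longrightarrow> scc A x = scc A v"
  unfolding scc_def by (auto intro: rtrancl_trans)

lemma comp_induced_aux:
  assumes "(x, y) \<in> A\<^sup>*" "x \<in> scc A v" "(y, v) \<in> A\<^sup>*"
  shows "(x, y) \<in> (induced_arcs A (scc A v))\<^sup>*"
  using assms
proof (induction rule: rtrancl_induct)
  case base then show ?case by simp
next
  case (step y z)
  have yv: "(y, v) \<in> A\<^sup>*" using step by (meson converse_rtrancl_into_rtrancl)
  have "(v, x) \<in> A\<^sup>*" using step(4) unfolding scc_def by simp
  then have vy: "(v, y) \<in> A\<^sup>*" "(v, z) \<in> A\<^sup>*" using step(1,2) by (auto intro: rtrancl_trans)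
  have "y \<in> scc A v" "z \<in> scc A v" using yv vy step(5) unfolding scc_def by auto
  then have "(y, z) \<in> induced_arcs A (scc A v)" using step(2) unfolding induced_arcs_def by simp
  then show ?case using step(3)[OF step(4) yv] by simp
qed

lemma comp_induced:
  "x \<in> scc A v \<Longrightarrow> y \<in> scc A v \<Longrightarrow> (x, y) \<in> (induced_arcs A (scc A v))\<^sup>*"
  using comp_induced_aux[of x y A v] unfolding scc_def by (auto intro: rtrancl_trans)

lemma comp_strong: "strongly_connected (scc A v) A"
  unfolding strongly_connected_def using comp_induced comp_self by fast

lemma induced_mono: "(x,y) \<in> (induced_arcs A S)\<^sup>* \<Longrightarrow> (x,y) \<in> A\<^sup>*"
  unfolding induced_arcs_def by (metis Int_lower1 rtrancl_mono subsetD)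

lemma strong_sub_comp: "strongly_connected S A \<Longrightarrow> v \<in> S \<Longrightarrow> S \<subseteq> scc A v"
  unfolding strongly_connected_def scc_def using induced_mono by fast

lemma strong_components_eq:
  assumes "A \<subseteq> V \<times> V"
  shows "strong_components V A = scc A ` V"
proof
  show "strong_components V A \<subseteq> scc A ` V"
  proof
    fix S assume S: "S \<in> strong_components V A"
    then have sc: "strongly_connected S A" and SV: "S \<subseteq> V"
      and mx: "\<And>S'. S \<subseteq> S' \<Longrightarrow> S' \<subseteq> V \<Longrightarrow> strongly_connected S' A \<Longrightarrow> S' = S"
      unfolding strong_components_def by auto
    obtain v where v: "v \<in> S" using sc unfolding strongly_connected_def by blast
    have 1: "S \<subseteq> scc A v" using strong_sub_comp[OF sc v] .
    have 2: "scc A v \<subseteq> V" using comp_sub[OF assms] SV v by blast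
    have "scc A v = S" using mx[OF 1 2 comp_strong] .
    then show "S \<in> scc A ` V" using v SV by blast
  qed
next
  show "scc A ` V \<subseteq> strong_components V A"
  proof
    fix S assume "S \<in> scc A ` V"
    then obtain v where v: "v \<in> V" "S = scc A v" by (rule imageE) simp
    have "S' = S" if "S \<subseteq> S'" "S' \<subseteq> V" "strongly_connected S' A" for S'
    proof -
      have "v \<in> S'" using that(1) v(2) comp_self[of v A] by blast
      then have "S' \<subseteq> scc A v" using strong_sub_comp[OF that(3)] by blast
      then show ?thesis using that(1) v(2) by blast
    qed
    moreover have "S \<subseteq> V" "strongly_connected S A"
      using v comp_sub[OF assms, of v] comp_strong[of A v] by auto
    ultimately show "S \<in> strong_components V A"
      unfolding strong_components_def by blast
  qed
qed



lemma tour_sub: "tournament V A \<Longrightarrow> A \<subseteq> V \<times> V"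
  unfolding tournament_def by blast
lemma tour_irr: "tournament V A \<Longrightarrow> (v, v) \<notin> A"
  unfolding tournament_def by blast
lemma tour_asym: "tournament V A \<Longrightarrow> (u, v) \<in> A \<Longrightarrow> (v, u) \<notin> A"
  unfolding tournament_def by (metis SigmaD1 SigmaD2 subsetD)
lemma tour_total: "tournament V A \<Longrightarrow> u \<in> V \<Longrightarrow> v \<in> V \<Longrightarrow> u \<noteq> v \<Longrightarrow> (u, v) \<in> A \<or> (v, u) \<in> A"
  unfolding tournament_def by blast
lemma tour_fin: "tournament V A \<Longrightarrow> finite V"
  unfolding tournament_def by blast

lemma dpath_reach:
  assumes "dpath V A p" "i \<le> j" "j < length p"
  shows "(p ! i, p ! j) \<in> A\<^sup>*"
  using assms(2,3)
proof (induction j)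
  case 0 then show ?case by simp
next
  case (Suc j)
  show ?case
  proof (cases "i = Suc j")
    case True then show ?thesis by simp
  next
    case False
    then have "(p ! i, p ! j) \<in> A\<^sup>*" using Suc by simp
    moreover have "(p ! j, p ! Suc j) \<in> A" using assms(1) Suc(3) unfolding dpath_def by blast
    ultimately show ?thesis by simp
  qed
qed

lemma dpath_hd_last:
  assumes "dpath V A p" "x \<in> set p"
  shows "(hd p, x) \<in> A\<^sup>* \<and> (x, last p) \<in> A\<^sup>*"
proof -
  obtain i where i: "i < length p" "x = p ! i" using assms(2) by (metis in_set_conv_nth)
  have ne: "p \<noteq> []" using assms(1) unfolding dpath_def by blast
  have "hd p = p ! 0" using ne by (simp add: hd_conv_nth)
  moreover have "last p = p ! (length p - 1)" using ne by (simp add: last_conv_nth)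
  ultimately show ?thesis using dpath_reach[OF assms(1)] i by auto
qed

lemma dpath_reach_hl: "dpath V A p \<Longrightarrow> (hd p, last p) \<in> A\<^sup>*"
  using dpath_hd_last[of V A p "hd p"] unfolding dpath_def by auto

lemma distinct_hd_last: "distinct p \<Longrightarrow> p \<noteq> [] \<Longrightarrow> hd p = last p \<Longrightarrow> p = [hd p]"
proof (cases p)
  case (Cons a r)
  assume d: "distinct p" and e: "hd p = last p"
  show ?thesis
  proof (cases r)
    case Nil then show ?thesis using Cons by simp
  next
    case (Cons b r')
    then have "last p \<in> set r" using \<open>p = a # r\<close> by simp
    then show ?thesis using d e \<open>p = a # r\<close> by simp
  qed
qed simp

lemma single_shortest: "u \<in> V \<Longrightarrow> shortest_dpath V A u u [u]"
  unfolding shortest_dpath_def dpath_def by (auto simp: Suc_leI)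

lemma good_Ig: "good Ig V A"
  unfolding good_def
proof (intro conjI ballI)
  fix u v assume "u \<in> V" "v \<in> V"
  show "Ig V A u v \<subseteq> V" unfolding Ig_def shortest_dpath_def dpath_def by blast
next
  fix u assume "u \<in> V"
  then show "u \<in> Ig V A u u" unfolding Ig_def using single_shortest[of u V A] by force
qed

lemma good_IP3: "good IP3 V A"
  unfolding good_def IP3_def by blast

lemma Ig_self: "u \<in> V \<Longrightarrow> Ig V A u u = {u}"
proof -
  assume u: "u \<in> V"
  have "p = [u]" if "shortest_dpath V A u u p" for p
    using that distinct_hd_last[of p] unfolding shortest_dpath_def dpath_def by metis
  then show ?thesis using good_Ig[of V A] u unfolding good_def Ig_def by fastforce
qed

lemma IP3_self: "tournament V A \<Longrightarrow> IP3 V A u u = {u}"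
  unfolding IP3_def using tour_asym by fast

lemma Ig_sym: "Ig V A u v = Ig V A v u"
  unfolding Ig_def by blast
lemma IP3_sym: "IP3 V A u v = IP3 V A v u"
  unfolding IP3_def by blast

lemma dpath_len1: "dpath V A q \<Longrightarrow> length q = 1 \<Longrightarrow> hd q = last q"
  by (cases q) auto

lemma dpath_len2: "dpath V A q \<Longrightarrow> length q = 2 \<Longrightarrow> (hd q, last q) \<in> A"
proof -
  assume "dpath V A q" "length q = 2"
  then obtain a b where "q = [a, b]" by (metis (no_types, lifting) One_nat_def Suc_1 length_0_conv length_Suc_conv)
  then show ?thesis using \<open>dpath V A q\<close> unfolding dpath_def by auto
qed

lemma dpath_len_ge: "dpath V A q \<Longrightarrow> length q \<ge> 1"
  unfolding dpath_def by (simp add: Suc_leI)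

lemma IP3_sub_Ig:
  assumes T: "tournament V A" and u: "u \<in> V" and v: "v \<in> V"
  shows "IP3 V A u v \<subseteq> Ig V A u v"
proof -
  have ends: "u \<in> Ig V A u v \<and> v \<in> Ig V A u v" if "u \<in> V" "v \<in> V" for u v
  proof (cases "u = v")
    case True then show ?thesis using Ig_self[OF that(2), of A] by auto
  next
    case False
    have "shortest_dpath V A a b [a, b]" if ab: "(a, b) \<in> A" for a b
    proof -
      have "a \<noteq> b" using tour_irr[OF T] ab by auto
      moreover have "a \<in> V" "b \<in> V" using tour_sub[OF T] ab by auto
      moreover have ge2: "length q \<ge> 2" if "dpath V A q" "hd q = a" "last q = b" for q
        using dpath_len1[OF that(1)] dpath_len_ge[OF that(1)] that \<open>a \<noteq> b\<close> by fastforce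
      moreover have dp: "dpath V A [a, b]" unfolding dpath_def using ab \<open>a \<noteq> b\<close> \<open>a \<in> V\<close> \<open>b \<in> V\<close>
        by (auto simp: nth_Cons split: nat.splits)
      have "\<forall>q. dpath V A q \<and> hd q = a \<and> last q = b \<longrightarrow> length [a, b] \<le> length q"
        using ge2[unfolded numeral_2_eq_2] by simp
      then show ?thesis unfolding shortest_dpath_def using dp by simp
    qed
    then show ?thesis using tour_total[OF T that False] unfolding Ig_def by force
  qed
  have mid: "w \<in> Ig V A a b" if "(a, w) \<in> A" "(w, b) \<in> A" "(a, b) \<notin> A" for a b w
  proof -
    have ab: "a \<noteq> b" using that tour_asym[OF T] by blast
    have "a \<noteq> w" "w \<noteq> b" using that tour_irr[OF T] by auto
    moreover have "a \<in> V" "b \<in> V" "w \<in> V" using tour_sub[OF T] that by auto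
    moreover have ge3: "length q \<ge> 3" if "dpath V A q" "hd q = a" "last q = b" for q
    proof -
      have "length q \<noteq> 1" using dpath_len1[OF that(1)] that ab by auto
      moreover have "length q \<noteq> 2" using dpath_len2[OF that(1)] that \<open>(a, b) \<notin> A\<close> by auto
      ultimately show ?thesis using dpath_len_ge[OF that(1)] by linarith
    qed
    moreover have dp: "dpath V A [a, w, b]" unfolding dpath_def
      using that ab \<open>a \<noteq> w\<close> \<open>w \<noteq> b\<close> \<open>a \<in> V\<close> \<open>b \<in> V\<close> \<open>w \<in> V\<close>
      by (auto simp: nth_Cons split: nat.splits)
    have "\<forall>q. dpath V A q \<and> hd q = a \<and> last q = b \<longrightarrow> length [a, w, b] \<le> length q"
      using ge3[unfolded numeral_3_eq_3] by simp
    then have "shortest_dpath V A a b [a, w, b]"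
      unfolding shortest_dpath_def using dp by simp
    then show ?thesis unfolding Ig_def by force
  qed
  show ?thesis
  proof
    fix x assume "x \<in> IP3 V A u v"
    then consider "x = u" | "x = v" | "(u, x) \<in> A \<and> (x, v) \<in> A \<and> (u, v) \<notin> A"
      | "(v, x) \<in> A \<and> (x, u) \<in> A \<and> (v, u) \<notin> A" unfolding IP3_def by blast
    then show "x \<in> Ig V A u v"
    proof cases
      case 1 then show ?thesis using ends u v by auto
    next
      case 2 then show ?thesis using ends u v by auto
    next
      case 3 then show ?thesis using mid by blast
    next
      case 4 then show ?thesis using mid[of v x u] Ig_sym[of V A u v] by simp
    qed
  qed
qed



lemma dpath_in_comp:
  assumes "dpath V A q" "hd q \<in> scc A c" "last q \<in> scc A c"
  shows "set q \<subseteq> scc A c"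
proof
  fix x assume "x \<in> set q"
  then have "(hd q, x) \<in> A\<^sup>*" "(x, last q) \<in> A\<^sup>*" using dpath_hd_last[OF assms(1)] by auto
  then show "x \<in> scc A c" using assms(2,3) unfolding scc_def by (auto intro: rtrancl_trans)
qed

lemma dpath_transfer:
  assumes T: "tournament V A" and c: "c \<in> V" and h: "hd q \<in> scc A c" "last q \<in> scc A c"
  shows "dpath V A q \<longleftrightarrow> dpath (scc A c) (induced_arcs A (scc A c)) q"
proof
  assume d: "dpath V A q"
  have "set q \<subseteq> scc A c" using dpath_in_comp[OF d h] .
  then show "dpath (scc A c) (induced_arcs A (scc A c)) q"
    using d unfolding dpath_def induced_arcs_def by (auto dest: nth_mem)
next
  assume "dpath (scc A c) (induced_arcs A (scc A c)) q"
  moreover have "scc A c \<subseteq> V" using comp_sub[OF tour_sub[OF T] c] .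
  ultimately show "dpath V A q" unfolding dpath_def induced_arcs_def by blast
qed

lemma shortest_transfer:
  assumes T: "tournament V A" and c: "c \<in> V" and uv: "u \<in> scc A c" "v \<in> scc A c"
  shows "shortest_dpath V A u v p \<longleftrightarrow> shortest_dpath (scc A c) (induced_arcs A (scc A c)) u v p"
  unfolding shortest_dpath_def using dpath_transfer[OF T c] uv by metis

lemma Ig_local:
  assumes T: "tournament V A" and c: "c \<in> V" and uv: "u \<in> scc A c" "v \<in> scc A c"
  shows "Ig V A u v = Ig (scc A c) (induced_arcs A (scc A c)) u v"
  unfolding Ig_def using shortest_transfer[OF T c uv] shortest_transfer[OF T c uv(2,1)] by simp

lemma IP3_local:
  assumes T: "tournament V A" and c: "c \<in> V" and uv: "u \<in> scc A c" "v \<in> scc A c"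
  shows "IP3 V A u v = IP3 (scc A c) (induced_arcs A (scc A c)) u v"
proof -
  have D: "scc A c \<subseteq> V" using comp_sub[OF tour_sub[OF T] c] .
  have m: "w \<in> scc A c" if "(a, w) \<in> A" "(w, b) \<in> A" "a \<in> scc A c" "b \<in> scc A c" for a b w
    using that unfolding scc_def by (auto intro: rtrancl_into_rtrancl converse_rtrancl_into_rtrancl)
  show ?thesis unfolding IP3_def induced_arcs_def using D m uv by blast
qed

lemma cross:
  assumes T: "tournament V A" and a: "(u, v) \<in> A" and nr: "(v, u) \<notin> A\<^sup>*"
  shows "Ig V A u v = {u, v}" "IP3 V A u v = {u, v}"
proof -
  have uv: "u \<noteq> v" using a tour_irr[OF T] by auto
  have V: "u \<in> V" "v \<in> V" using a tour_sub[OF T] by auto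
  have dp: "dpath V A [u, v]" unfolding dpath_def using a uv V by (auto simp: nth_Cons split: nat.splits)
  have ge2: "length q \<ge> 2" if "dpath V A q" "hd q = u" "last q = v" for q
    using dpath_len1[OF that(1)] dpath_len_ge[OF that(1)] that uv by fastforce
  have sh: "shortest_dpath V A u v [u, v]"
  proof -
    have "\<forall>q. dpath V A q \<and> hd q = u \<and> last q = v \<longrightarrow> length [u, v] \<le> length q"
      using ge2[unfolded numeral_2_eq_2] by simp
    then show ?thesis unfolding shortest_dpath_def using dp by simp
  qed
  have p2: "p = [u, v]" if "shortest_dpath V A u v p" for p
  proof -
    have "length p \<le> 2" using that dp unfolding shortest_dpath_def by fastforce
    moreover have "length p \<ge> 2" using ge2 that unfolding shortest_dpath_def by blast
    ultimately have "length p = 2" by simp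
    then obtain a b where "p = [a, b]"
      by (metis (no_types, lifting) One_nat_def Suc_1 length_0_conv length_Suc_conv)
    then show ?thesis using that unfolding shortest_dpath_def by simp
  qed
  have nvu: "\<not> shortest_dpath V A v u p" for p
  proof
    assume "shortest_dpath V A v u p"
    then have "dpath V A p \<and> hd p = v \<and> last p = u" unfolding shortest_dpath_def by blast
    then show False using dpath_reach_hl[of V A p] nr by metis
  qed
  have e: "(shortest_dpath V A u v p \<or> shortest_dpath V A v u p) \<longleftrightarrow> p = [u, v]" for p
    using p2 nvu sh by blast
  show "Ig V A u v = {u, v}" unfolding Ig_def e by auto
  show "IP3 V A u v = {u, v}" unfolding IP3_def using a nr tour_asym[OF T a]
    by (auto intro: rtrancl_trans)
qed

lemma diff_comp:
  assumes T: "tournament V A" and u: "u \<in> V" and v: "v \<in> V" and d: "v \<notin> scc A u"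
  shows "Ig V A u v = {u, v}" "IP3 V A u v = {u, v}"
proof -
  have "u \<noteq> v" using d comp_self by metis
  then have "(u, v) \<in> A \<or> (v, u) \<in> A" using tour_total[OF T u v] by blast
  then have "Ig V A u v = {u, v} \<and> IP3 V A u v = {u, v}"
  proof
    assume a: "(u, v) \<in> A"
    then have "(v, u) \<notin> A\<^sup>*" using d unfolding scc_def by auto
    then show ?thesis using cross[OF T a] by simp
  next
    assume a: "(v, u) \<in> A"
    then have "(u, v) \<notin> A\<^sup>*" using d unfolding scc_def by auto
    then show ?thesis using cross[OF T a] Ig_sym[of V A u v] IP3_sym[of V A u v] by auto
  qed
  then show "Ig V A u v = {u, v}" "IP3 V A u v = {u, v}" by auto
qed



lemma union_inter:
  assumes "\<forall>D'\<in>F. X D' \<subseteq> D'" "\<forall>D\<in>F. \<forall>D'\<in>F. D \<noteq> D' \<longrightarrow> D \<inter> D' = {}" "D \<in> F"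
  shows "(\<Union>D'\<in>F. X D') \<inter> D = X D"
proof
  show "(\<Union>D'\<in>F. X D') \<inter> D \<subseteq> X D"
  proof
    fix x assume "x \<in> (\<Union>D'\<in>F. X D') \<inter> D"
    then obtain D' where D': "D' \<in> F" "x \<in> X D'" "x \<in> D" by blast
    then have "x \<in> D'" using assms(1) by blast
    then have "D' = D" using assms(2,3) D' by blast
    then show "x \<in> X D" using D' by simp
  qed
  show "X D \<subseteq> (\<Union>D'\<in>F. X D') \<inter> D" using assms(1,3) by blast
qed

lemma least_add:
  fixes F :: "'a set set" and Q :: "'a set \<Rightarrow> 'a set \<Rightarrow> bool" and P :: "'a set \<Rightarrow> bool"
  assumes fin: "finite V" and sub: "\<forall>D\<in>F. D \<subseteq> V" and un: "\<Union>F = V"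
    and disj: "\<forall>D\<in>F. \<forall>D'\<in>F. D \<noteq> D' \<longrightarrow> D \<inter> D' = {}"
    and P: "\<And>S. P S \<longleftrightarrow> S \<subseteq> V \<and> (\<forall>D\<in>F. Q D (S \<inter> D))"
    and Qsub: "\<And>D X. D \<in> F \<Longrightarrow> Q D X \<Longrightarrow> X \<subseteq> D"
    and Qex: "\<And>D. D \<in> F \<Longrightarrow> Q D D"
  shows "(LEAST n. \<exists>S. P S \<and> card S = n) = (\<Sum>D\<in>F. LEAST n. \<exists>X. Q D X \<and> card X = n)"
proof -
  define m where "m D = (LEAST n. \<exists>X. Q D X \<and> card X = n)" for D
  have finF: "finite F" using fin un by (metis finite_UnionD)
  have ex: "\<exists>X. Q D X \<and> card X = m D" if "D \<in> F" for D
    unfolding m_def by (rule LeastI_ex) (use Qex[OF that] in blast)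
  define X where "X D = (SOME X. Q D X \<and> card X = m D)" for D
  have X: "Q D (X D) \<and> card (X D) = m D" if "D \<in> F" for D
    unfolding X_def using someI_ex[OF ex[OF that]] .
  have Xsub: "\<forall>D\<in>F. X D \<subseteq> D" using X Qsub by blast
  define S0 where "S0 = (\<Union>D\<in>F. X D)"
  have S0D: "S0 \<inter> D = X D" if "D \<in> F" for D
    unfolding S0_def using union_inter[OF Xsub disj that] .
  have "S0 \<subseteq> V" unfolding S0_def using sub Xsub by blast
  then have PS0: "P S0" unfolding P using S0D X by auto
  have finD: "finite D" if "D \<in> F" for D using that sub fin finite_subset by blast
  have cS0: "card S0 = (\<Sum>D\<in>F. m D)"
    unfolding S0_def
  proof (subst card_UN_disjoint)
    show "finite F" by (rule finF)
    show "\<forall>i\<in>F. finite (X i)" using Xsub finD finite_subset by blast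
    show "\<forall>i\<in>F. \<forall>j\<in>F. i \<noteq> j \<longrightarrow> X i \<inter> X j = {}" using Xsub disj by blast
    show "(\<Sum>i\<in>F. card (X i)) = sum m F" using X by simp
  qed
  have lb: "(\<Sum>D\<in>F. m D) \<le> card S" if "P S" for S
  proof -
    have SV: "S \<subseteq> V" and Q: "\<forall>D\<in>F. Q D (S \<inter> D)" using that P by auto
    have e: "S = (\<Union>D\<in>F. S \<inter> D)" using SV un by blast
    have "card (\<Union>D\<in>F. S \<inter> D) = (\<Sum>D\<in>F. card (S \<inter> D))"
      by (rule card_UN_disjoint[OF finF]) (use finD disj in auto)
    then have "card S = (\<Sum>D\<in>F. card (S \<inter> D))" using e by simp
    moreover have "m D \<le> card (S \<inter> D)" if "D \<in> F" for D
      unfolding m_def by (rule Least_le) (use Q that in blast)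
    ultimately show ?thesis by (simp add: sum_mono)
  qed
  show ?thesis
    unfolding m_def[symmetric]
  proof (rule Least_equality)
    show "\<exists>S. P S \<and> card S = sum m F" using PS0 cS0 by blast
    show "\<And>y. \<exists>S. P S \<and> card S = y \<Longrightarrow> sum m F \<le> y" using lb by blast
  qed
qed



context
  fixes V :: "'a set" and A :: "('a \<times> 'a) set" and I :: "'a intfun"
  assumes T: "tournament V A" and II: "I = Ig \<or> I = IP3"
begin

lemma loc_same: "c \<in> V \<Longrightarrow> u \<in> scc A c \<Longrightarrow> v \<in> scc A c \<Longrightarrow>
   I V A u v = I (scc A c) (induced_arcs A (scc A c)) u v"
  using II Ig_local[OF T] IP3_local[OF T] by metis

lemma loc_diff: "u \<in> V \<Longrightarrow> v \<in> V \<Longrightarrow> v \<notin> scc A u \<Longrightarrow> I V A u v = {u, v}"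
  using II diff_comp[OF T] by metis

lemma loc_good: "good I D A'"
  using II good_Ig good_IP3 by metis

lemma F_sub: "D \<in> scc A ` V \<Longrightarrow> D \<subseteq> V"
  using comp_sub[OF tour_sub[OF T]] by blast

lemma F_un: "\<Union>(scc A ` V) = V"
  using comp_sub[OF tour_sub[OF T]] comp_self[of _ A] by blast

lemma F_disj: "\<forall>D\<in>scc A ` V. \<forall>D'\<in>scc A ` V. D \<noteq> D' \<longrightarrow> D \<inter> D' = {}"
proof (intro ballI impI)
  fix D D' assume "D \<in> scc A ` V" "D' \<in> scc A ` V" "D \<noteq> D'"
  then obtain c c' where "D = scc A c" "D' = scc A c'" by blast
  then show "D \<inter> D' = {}" using comp_eq[of _ A c] comp_eq[of _ A c'] \<open>D \<noteq> D'\<close> by blast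
qed

lemma IsetD_sub: "D \<in> scc A ` V \<Longrightarrow> X \<subseteq> D \<Longrightarrow> Iset I D (induced_arcs A D) X \<subseteq> D"
  using Iset_sub[OF loc_good] by blast

lemma Iset_decomp:
  assumes S: "S \<subseteq> V"
  shows "Iset I V A S = (\<Union>D\<in>scc A ` V. Iset I D (induced_arcs A D) (S \<inter> D))"
proof
  show "Iset I V A S \<subseteq> (\<Union>D\<in>scc A ` V. Iset I D (induced_arcs A D) (S \<inter> D))"
  proof
    fix x assume "x \<in> Iset I V A S"
    then obtain u v where uv: "u \<in> S" "v \<in> S" "x \<in> I V A u v" unfolding Iset_def by blast
    have uV: "u \<in> V" "v \<in> V" using uv S by auto
    show "x \<in> (\<Union>D\<in>scc A ` V. Iset I D (induced_arcs A D) (S \<inter> D))"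
    proof (cases "v \<in> scc A u")
      case True
      have "x \<in> I (scc A u) (induced_arcs A (scc A u)) u v"
        using loc_same[OF uV(1) comp_self True] uv by simp
      then have "x \<in> Iset I (scc A u) (induced_arcs A (scc A u)) (S \<inter> scc A u)"
        unfolding Iset_def using uv True comp_self[of u A] by blast
      then show ?thesis using uV by blast
    next
      case False
      then have "x = u \<or> x = v" using loc_diff[OF uV False] uv by simp
      moreover have "w \<in> Iset I (scc A w) (induced_arcs A (scc A w)) (S \<inter> scc A w)" if "w \<in> S" for w
      proof -
        have "w \<in> I (scc A w) (induced_arcs A (scc A w)) w w"
          using loc_good comp_self[of w A] unfolding good_def by blast
        then show ?thesis unfolding Iset_def using that comp_self[of w A] by blast
      qed
      ultimately show ?thesis using uv uV by blast
    qed
  qed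
next
  show "(\<Union>D\<in>scc A ` V. Iset I D (induced_arcs A D) (S \<inter> D)) \<subseteq> Iset I V A S"
  proof
    fix x assume "x \<in> (\<Union>D\<in>scc A ` V. Iset I D (induced_arcs A D) (S \<inter> D))"
    then obtain c u v where c: "c \<in> V" "u \<in> S \<inter> scc A c" "v \<in> S \<inter> scc A c"
      "x \<in> I (scc A c) (induced_arcs A (scc A c)) u v" unfolding Iset_def by blast
    then have "x \<in> I V A u v" using loc_same[OF c(1)] by simp
    then show "x \<in> Iset I V A S" unfolding Iset_def using c by blast
  qed
qed

lemma good_T: "good I V A"
  unfolding good_def
proof (intro conjI ballI)
  fix u v assume uv: "u \<in> V" "v \<in> V"
  have "I V A u v \<subseteq> Iset I V A {u, v}" unfolding Iset_def by blast
  also have "\<dots> \<subseteq> V"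
  proof -
    have sub: "{u, v} \<subseteq> V" using uv by blast
    have "Iset I D (induced_arcs A D) ({u, v} \<inter> D) \<subseteq> V" if "D \<in> scc A ` V" for D
      using IsetD_sub[OF that, of "{u, v} \<inter> D"] F_sub[OF that] by blast
    then show ?thesis unfolding Iset_decomp[OF sub] by (intro UN_least)
  qed
  finally show "I V A u v \<subseteq> V" .
next
  fix u assume u: "u \<in> V"
  have "u \<in> I (scc A u) (induced_arcs A (scc A u)) u u"
    using loc_good comp_self[of u A] unfolding good_def by blast
  then show "u \<in> I V A u u" using loc_same[OF u comp_self comp_self] by simp
qed

lemma Iset_inter:
  assumes S: "S \<subseteq> V" and D: "D \<in> scc A ` V"
  shows "Iset I V A S \<inter> D = Iset I D (induced_arcs A D) (S \<inter> D)"
  unfolding Iset_decomp[OF S]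
  by (rule union_inter[OF _ F_disj D]) (use IsetD_sub in blast)

lemma interval_decomp:
  "interval_set I V A S \<longleftrightarrow> S \<subseteq> V \<and> (\<forall>D\<in>scc A ` V. interval_set I D (induced_arcs A D) (S \<inter> D))"
proof
  assume a: "interval_set I V A S"
  then have S: "S \<subseteq> V" "Iset I V A S = V" unfolding interval_set_def by auto
  show "S \<subseteq> V \<and> (\<forall>D\<in>scc A ` V. interval_set I D (induced_arcs A D) (S \<inter> D))"
  proof (intro conjI ballI)
    fix D assume D: "D \<in> scc A ` V"
    have "Iset I D (induced_arcs A D) (S \<inter> D) = D" using Iset_inter[OF S(1) D] S(2) F_sub[OF D] by blast
    then show "interval_set I D (induced_arcs A D) (S \<inter> D)" unfolding interval_set_def by blast
  qed (use S in auto)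
next
  assume a: "S \<subseteq> V \<and> (\<forall>D\<in>scc A ` V. interval_set I D (induced_arcs A D) (S \<inter> D))"
  then have "Iset I V A S = (\<Union>D\<in>scc A ` V. D)" using Iset_decomp unfolding interval_set_def by simp
  then show "interval_set I V A S" unfolding interval_set_def using a F_un by simp
qed

lemma convex_decomp:
  assumes C: "C \<subseteq> V"
  shows "convex I V A C \<longleftrightarrow> (\<forall>D\<in>scc A ` V. convex I D (induced_arcs A D) (C \<inter> D))"
proof
  assume "convex I V A C"
  then have e: "Iset I V A C = C" unfolding convex_def by blast
  show "\<forall>D\<in>scc A ` V. convex I D (induced_arcs A D) (C \<inter> D)"
    using Iset_inter[OF C] e unfolding convex_def by auto
next
  assume a: "\<forall>D\<in>scc A ` V. convex I D (induced_arcs A D) (C \<inter> D)"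
  have "Iset I V A C = (\<Union>D\<in>scc A ` V. C \<inter> D)" unfolding Iset_decomp[OF C]
    using a unfolding convex_def by simp
  also have "\<dots> = C" using C F_un by blast
  finally show "convex I V A C" unfolding convex_def using C by blast
qed

lemma hull_decomp:
  assumes S: "S \<subseteq> V"
  shows "convex_hull I V A S = (\<Union>D\<in>scc A ` V. convex_hull I D (induced_arcs A D) (S \<inter> D))"
    (is "?H = ?H'")
proof
  have hs: "convex_hull I D (induced_arcs A D) (S \<inter> D) \<subseteq> D" for D
    using hull_sub'[OF loc_good] by blast
  have H'V: "?H' \<subseteq> V" using hs F_sub by blast
  have H'D: "?H' \<inter> D = convex_hull I D (induced_arcs A D) (S \<inter> D)" if "D \<in> scc A ` V" for D
    by (rule union_inter[OF _ F_disj that]) (use hs in blast)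
  have "convex I V A ?H'"
    unfolding convex_decomp[OF H'V] using H'D hull_convex[OF loc_good] by simp
  moreover have "S \<subseteq> ?H'"
  proof
    fix x assume x: "x \<in> S"
    then have "x \<in> S \<inter> scc A x" using comp_self[of x A] by blast
    then have "x \<in> convex_hull I (scc A x) (induced_arcs A (scc A x)) (S \<inter> scc A x)"
      using hull_sup[of "S \<inter> scc A x"] by blast
    moreover have "scc A x \<in> scc A ` V" using x S by blast
    ultimately show "x \<in> ?H'" by blast
  qed
  ultimately show "?H \<subseteq> ?H'" by (rule hull_least)
next
  have cH: "convex I V A ?H" using hull_convex[OF good_T S] .
  have HV: "?H \<subseteq> V" using hull_sub'[OF good_T S] .
  show "?H' \<subseteq> ?H"
  proof
    fix x assume "x \<in> ?H'"
    then obtain D where D: "D \<in> scc A ` V" "x \<in> convex_hull I D (induced_arcs A D) (S \<inter> D)" by blast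
    have "convex I D (induced_arcs A D) (?H \<inter> D)" using cH convex_decomp[OF HV] D(1) by blast
    moreover have "S \<inter> D \<subseteq> ?H \<inter> D" using hull_sup[of S I V A] by blast
    ultimately have "convex_hull I D (induced_arcs A D) (S \<inter> D) \<subseteq> ?H \<inter> D" by (rule hull_least)
    then show "x \<in> ?H" using D(2) by blast
  qed
qed

lemma hull_set_decomp:
  "hull_set I V A S \<longleftrightarrow> S \<subseteq> V \<and> (\<forall>D\<in>scc A ` V. hull_set I D (induced_arcs A D) (S \<inter> D))"
proof
  assume a: "hull_set I V A S"
  then have S: "S \<subseteq> V" "convex_hull I V A S = V" unfolding hull_set_def by auto
  show "S \<subseteq> V \<and> (\<forall>D\<in>scc A ` V. hull_set I D (induced_arcs A D) (S \<inter> D))"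
  proof (intro conjI ballI)
    fix D assume D: "D \<in> scc A ` V"
    have hs: "convex_hull I D' (induced_arcs A D') (S \<inter> D') \<subseteq> D'" for D'
      using hull_sub'[OF loc_good] by blast
    have "convex_hull I D (induced_arcs A D) (S \<inter> D) = V \<inter> D"
      using union_inter[OF _ F_disj D, of "\<lambda>D. convex_hull I D (induced_arcs A D) (S \<inter> D)"]
        hs hull_decomp[OF S(1)] S(2) by simp
    then show "hull_set I D (induced_arcs A D) (S \<inter> D)" unfolding hull_set_def
      using F_sub[OF D] by blast
  qed (use S in auto)
next
  assume a: "S \<subseteq> V \<and> (\<forall>D\<in>scc A ` V. hull_set I D (induced_arcs A D) (S \<inter> D))"
  then have "convex_hull I V A S = (\<Union>D\<in>scc A ` V. D)" using hull_decomp unfolding hull_set_def by simp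
  then show "hull_set I V A S" unfolding hull_set_def using a F_un by simp
qed

lemma finV: "finite V" using T unfolding tournament_def by blast

theorem interval_additive:
  "interval_number I V A = (\<Sum>D\<in>scc A ` V. interval_number I D (induced_arcs A D))"
  unfolding interval_number_def
proof (rule least_add[OF finV _ F_un F_disj interval_decomp])
  show "\<forall>D\<in>scc A ` V. D \<subseteq> V" using F_sub by blast
  show "\<And>D X. interval_set I D (induced_arcs A D) X \<Longrightarrow> X \<subseteq> D" unfolding interval_set_def by blast
  show "\<And>D. interval_set I D (induced_arcs A D) D"
    unfolding interval_set_def using Iset_sub[OF loc_good] Iset_sup[OF loc_good] by blast
qed

theorem hull_additive:
  "hull_number I V A = (\<Sum>D\<in>scc A ` V. hull_number I D (induced_arcs A D))"
  unfolding hull_number_def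
proof (rule least_add[OF finV _ F_un F_disj hull_set_decomp])
  show "\<forall>D\<in>scc A ` V. D \<subseteq> V" using F_sub by blast
  show "\<And>D X. hull_set I D (induced_arcs A D) X \<Longrightarrow> X \<subseteq> D" unfolding hull_set_def by blast
  show "\<And>D. hull_set I D (induced_arcs A D) D"
  proof -
    fix D
    have "convex_hull I D (induced_arcs A D) D \<subseteq> D" by (rule hull_sub'[OF loc_good order_refl])
    moreover have "D \<subseteq> convex_hull I D (induced_arcs A D) D" by (rule hull_sup)
    ultimately show "hull_set I D (induced_arcs A D) D" unfolding hull_set_def by blast
  qed
qed

end



lemma ind_V: "A \<subseteq> V \<times> V \<Longrightarrow> induced_arcs A V = A"
  unfolding induced_arcs_def by blast

lemma ind_ind: "induced_arcs (induced_arcs A D) D = induced_arcs A D"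
  unfolding induced_arcs_def by blast

lemma ind_sub: "(x, y) \<in> (induced_arcs A S)\<^sup>* \<Longrightarrow> x \<in> S \<Longrightarrow> y \<in> S"
  by (induction rule: rtrancl_induct) (auto simp: induced_arcs_def)

lemma convex_empty: "convex I V A {}"
  unfolding convex_def Iset_def by simp

lemma convex_single: "v \<in> V \<Longrightarrow> I V A v v = {v} \<Longrightarrow> convex I V A {v}"
  unfolding convex_def Iset_def by simp

lemma hull_empty: "convex_hull I V A {} = {}"
  using hull_least[OF convex_empty, of "{}" I V A] by blast

lemma hull_lower:
  assumes g: "good I V A" and self: "\<forall>u\<in>V. I V A u u = {u}" and fin: "finite V"
    and c2: "card V \<ge> 2" and h: "hull_set I V A S"
  shows "card S \<ge> 2"
proof (rule ccontr)
  assume "\<not> card S \<ge> 2"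
  then have c: "card S = 0 \<or> card S = 1" by linarith
  have SV: "S \<subseteq> V" and hv: "convex_hull I V A S = V" using h unfolding hull_set_def by auto
  have fS: "finite S" using SV fin finite_subset by blast
  from c show False
  proof
    assume "card S = 0"
    then have "S = {}" using fS by simp
    then have "V = {}" using hv hull_empty[of I V A] by simp
    then show False using c2 by simp
  next
    assume "card S = 1"
    then obtain s where s: "S = {s}" by (rule card_1_singletonE)
    then have sV: "s \<in> V" using SV by blast
    then have "convex I V A {s}" using convex_single[OF sV] self by blast
    then have "convex_hull I V A S \<subseteq> {s}" using hull_least s by blast
    then have "V \<subseteq> {s}" using hv by simp
    then have "card V \<le> card {s}" by (rule card_mono[rotated]) simp
    then have "card V \<le> 1" by simp
    then show False using c2 by simp
  qed
qed

lemma hull_number_single: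
  assumes g: "good I {v} A"
  shows "hull_number I {v} A = 1"
  unfolding hull_number_def
proof (rule Least_equality)
  have "convex_hull I {v} A {v} \<subseteq> {v}" by (rule hull_sub'[OF g order_refl])
  moreover have "{v} \<subseteq> convex_hull I {v} A {v}" by (rule hull_sup)
  ultimately have "hull_set I {v} A {v}" unfolding hull_set_def by blast
  then show "\<exists>S. hull_set I {v} A S \<and> card S = 1" by fastforce
next
  fix n assume "\<exists>S. hull_set I {v} A S \<and> card S = n"
  then obtain S where S: "hull_set I {v} A S" "card S = n" by blast
  have "S \<noteq> {}" using S(1) hull_empty unfolding hull_set_def by fastforce
  moreover have "finite S" using S(1) unfolding hull_set_def by (metis finite.intros finite_subset)
  ultimately have "card S > 0" by (simp add: card_gt_0_iff)
  then show "1 \<le> n" using S(2) by simp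
qed

lemma hull_number_two:
  assumes g: "good I V A" and self: "\<forall>u\<in>V. I V A u u = {u}" and fin: "finite V"
    and c2: "card V \<ge> 2" and ab: "hull_set I V A {a, b}" "a \<noteq> b"
  shows "hull_number I V A = 2"
  unfolding hull_number_def
proof (rule Least_equality)
  show "\<exists>S. hull_set I V A S \<and> card S = 2" using ab by fastforce
next
  fix n assume "\<exists>S. hull_set I V A S \<and> card S = n"
  then show "2 \<le> n" using hull_lower[OF g self fin c2] by blast
qed



context
  fixes V :: "'a set" and A :: "('a \<times> 'a) set"
  assumes T: "tournament V A" and SC: "strongly_connected V A" and c2: "card V \<ge> 2"
begin

abbreviation H where "H S \<equiv> convex_hull IP3 V A S"

lemma reach: "x \<in> V \<Longrightarrow> y \<in> V \<Longrightarrow> (x, y) \<in> A\<^sup>*"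
  using SC ind_V[OF tour_sub[OF T]] unfolding strongly_connected_def by simp

lemma AV: "(x, y) \<in> A \<Longrightarrow> x \<in> V \<and> y \<in> V"
  using tour_sub[OF T] by blast

lemma three_cycle: "\<exists>a b c. (a, b) \<in> A \<and> (b, c) \<in> A \<and> (c, a) \<in> A"
proof -
  have fin: "finite V" using tour_fin[OF T] .
  obtain v where v: "v \<in> V" using c2 by (metis card.empty ex_in_conv not_numeral_le_zero)
  have "\<exists>x\<in>V. x \<noteq> v"
  proof (rule ccontr)
    assume "\<not> (\<exists>x\<in>V. x \<noteq> v)"
    then have "V \<subseteq> {v}" by blast
    then have "card V \<le> 1" using card_mono[of "{v}" V] by simp
    then show False using c2 by simp
  qed
  then obtain x where x: "x \<in> V" "x \<noteq> v" by blast
  obtain p q where "p \<in> {v}" "q \<notin> {v}" "(p, q) \<in> A"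
    using exit_lemma[OF reach[OF v x(1)], of "{v}"] x by auto
  then have vq: "(v, q) \<in> A" by simp
  define Ov where "Ov = {w. (v, w) \<in> A}"
  have "(q, v) \<in> A\<^sup>*" using reach AV vq v by blast
  moreover have "q \<in> Ov" "v \<notin> Ov" using vq tour_irr[OF T] unfolding Ov_def by auto
  ultimately obtain p' q' where pq: "p' \<in> Ov" "q' \<notin> Ov" "(p', q') \<in> A"
    using exit_lemma[of q v A Ov] by blast
  have vp: "(v, p') \<in> A" using pq Ov_def by simp
  have "q' \<noteq> v" using tour_asym[OF T vp] pq(3) by auto
  moreover have "(v, q') \<notin> A" using pq(2) Ov_def by simp
  ultimately have "(q', v) \<in> A" using tour_total[OF T v] AV[OF pq(3)] by blast
  then show ?thesis using vp pq(3) by blast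
qed

lemma hull_strong:
  assumes ab: "(a, b) \<in> A" "(b, c) \<in> A" "(c, a) \<in> A"
  shows "\<forall>x\<in>H {a, b}. (a, x) \<in> (induced_arcs A (H {a, b}))\<^sup>* \<and> (x, a) \<in> (induced_arcs A (H {a, b}))\<^sup>*"
proof -
  let ?H = "H {a, b}"
  let ?R = "induced_arcs A ?H"
  have abV: "{a, b} \<subseteq> V" using AV ab by blast
  have HV: "?H \<subseteq> V" using hull_sub'[OF good_IP3 abV] .
  have aH: "a \<in> ?H" "b \<in> ?H" using hull_sup[of "{a,b}" IP3 V A] by auto
  have "c \<in> IP3 V A a b" unfolding IP3_def using ab AV tour_asym[OF T ab(1)] by blast
  then have cH: "c \<in> ?H" using hull_closed[OF aH] by blast
  define K where "K = {x \<in> ?H. (a, x) \<in> ?R\<^sup>* \<and> (x, a) \<in> ?R\<^sup>*}"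
  have aK: "a \<in> K" unfolding K_def using aH by simp
  have bK: "b \<in> K"
  proof -
    have r: "(a, b) \<in> ?R" "(b, c) \<in> ?R" "(c, a) \<in> ?R" using ab aH cH unfolding induced_arcs_def by auto
    have "(b, a) \<in> ?R\<^sup>*" by (rule rtrancl_trans[OF r_into_rtrancl r_into_rtrancl]) (fact r)+
    moreover have "(a, b) \<in> ?R\<^sup>*" using r by blast
    ultimately show ?thesis unfolding K_def using aH by simp
  qed
  have KV: "K \<subseteq> V" using HV K_def by blast
  have "Iset IP3 V A K \<subseteq> K"
  proof
    fix x assume "x \<in> Iset IP3 V A K"
    then obtain y z where yz: "y \<in> K" "z \<in> K" "x \<in> IP3 V A y z" unfolding Iset_def by blast
    have yzH: "y \<in> ?H" "z \<in> ?H" using yz K_def by auto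
    have xH: "x \<in> ?H" using hull_closed[OF yzH] yz(3) by blast
    have mid: "x \<in> K" if "(y', x) \<in> A" "(x, z') \<in> A" "y' \<in> K" "z' \<in> K" for y' z'
    proof -
      have "(y', x) \<in> ?R" "(x, z') \<in> ?R" using that xH K_def unfolding induced_arcs_def by auto
      moreover have "(a, y') \<in> ?R\<^sup>*" "(z', a) \<in> ?R\<^sup>*" using that K_def by auto
      ultimately have "(a, x) \<in> ?R\<^sup>*" "(x, a) \<in> ?R\<^sup>*"
        by (auto intro: rtrancl_into_rtrancl converse_rtrancl_into_rtrancl)
      then show ?thesis unfolding K_def using xH by simp
    qed
    from yz(3) consider "x = y" | "x = z" | "(y, x) \<in> A \<and> (x, z) \<in> A" | "(z, x) \<in> A \<and> (x, y) \<in> A"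
      unfolding IP3_def by blast
    then show "x \<in> K" using yz mid by cases auto
  qed
  then have cK: "convex IP3 V A K" unfolding convex_def using KV Iset_sup[OF good_IP3 KV] by blast
  have "{a, b} \<subseteq> K" using aK bK by blast
  then have "?H \<subseteq> K" by (rule hull_least[OF cK])
  then show ?thesis unfolding K_def by blast
qed

lemma module:
  assumes ab: "(a, b) \<in> A" "(b, c) \<in> A" "(c, a) \<in> A" and x: "x \<in> V" "x \<notin> H {a, b}"
  shows "(\<forall>h\<in>H {a, b}. (x, h) \<in> A) \<or> (\<forall>h\<in>H {a, b}. (h, x) \<in> A)"
proof (rule ccontr)
  let ?H = "H {a, b}"
  let ?R = "induced_arcs A ?H"
  assume "\<not> ?thesis"
  then obtain h1 h2 where h: "h1 \<in> ?H" "h2 \<in> ?H" "(x, h1) \<notin> A" "(h2, x) \<notin> A" by blast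
  have abV: "{a, b} \<subseteq> V" using AV ab by blast
  have HV: "?H \<subseteq> V" using hull_sub'[OF good_IP3 abV] .
  note st = hull_strong[OF ab]
  have "(h2, h1) \<in> ?R\<^sup>*" using st h(1,2) by (meson rtrancl_trans)
  moreover have "h2 \<in> {h. (h, x) \<notin> A}" using h by simp
  moreover have "h1 \<noteq> x" using h x by blast
  then have "(h1, x) \<in> A" using h(1,3) x(1) HV tour_total[OF T, of h1 x] by blast
  then have "h1 \<notin> {h. (h, x) \<notin> A}" by simp
  ultimately obtain p q where pq: "(p, x) \<notin> A" "(q, x) \<in> A" "(p, q) \<in> ?R"
    using exit_lemma[of h2 h1 ?R "{h. (h, x) \<notin> A}"] by blast
  have pqH: "p \<in> ?H" "q \<in> ?H" "(p, q) \<in> A" using pq(3) unfolding induced_arcs_def by auto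
  have "p \<noteq> x" using x pqH by blast
  then have xp: "(x, p) \<in> A" using tour_total[OF T] x HV pqH pq(1) by blast
  have "(q, p) \<notin> A" using tour_asym[OF T pqH(3)] .
  then have "x \<in> IP3 V A q p" unfolding IP3_def using x xp pq(2) by blast
  then have "x \<in> ?H" using hull_closed[OF pqH(2,1)] by blast
  then show False using x by blast
qed

end



context
  fixes V :: "'a set" and A :: "('a \<times> 'a) set"
  assumes T: "tournament V A" and SC: "strongly_connected V A" and c2: "card V \<ge> 2"
begin

lemmas reach' = reach[OF T SC c2]
lemmas AV' = AV[OF T SC c2]
lemmas module' = module[OF T SC c2]
lemmas three_cycle' = three_cycle[OF T SC c2]

lemma escape:
  assumes ab: "(a, b) \<in> A" "(b, c) \<in> A" "(c, a) \<in> A"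
    and ne: "convex_hull IP3 V A {a, b} \<noteq> V"
  shows "\<exists>y x. (a, y) \<in> A \<and> (y, x) \<in> A \<and> (x, a) \<in> A \<and>
     card (convex_hull IP3 V A {a, b}) < card (convex_hull IP3 V A {a, y})"
proof -
  let ?H = "convex_hull IP3 V A {a, b}"
  have abV: "{a, b} \<subseteq> V" using AV' ab by blast
  have HV: "?H \<subseteq> V" using hull_sub'[OF good_IP3 abV] .
  have aH: "a \<in> ?H" using hull_sup[of "{a,b}" IP3 V A] by auto
  obtain z where z: "z \<in> V" "z \<notin> ?H" using HV ne by blast
  have aV: "a \<in> V" using abV by simp
  obtain p b' where pb: "p \<in> ?H" "b' \<notin> ?H" "(p, b') \<in> A"
    using exit_lemma[OF reach'[OF aV z(1)] aH z(2)] by blast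
  have b'V: "b' \<in> V" using AV'[OF pb(3)] by simp
  have "\<not> (\<forall>h\<in>?H. (b', h) \<in> A)" using pb tour_asym[OF T pb(3)] by blast
  then have b'out: "\<forall>h\<in>?H. (h, b') \<in> A" using module'[OF ab b'V pb(2)] by blast
  define Out where "Out = {y \<in> V. y \<notin> ?H \<and> (\<forall>h\<in>?H. (h, y) \<in> A)}"
  have "b' \<in> Out" using b'V pb(2) b'out Out_def by simp
  moreover have "a \<notin> Out" using aH Out_def by simp
  ultimately obtain y x where yx: "y \<in> Out" "x \<notin> Out" "(y, x) \<in> A"
    using exit_lemma[OF reach'[OF b'V aV]] by blast
  have xV: "x \<in> V" using AV'[OF yx(3)] by simp
  have yV: "y \<in> V" "y \<notin> ?H" and yin: "\<forall>h\<in>?H. (h, y) \<in> A" using yx(1) Out_def by auto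
  have xH: "x \<notin> ?H"
  proof
    assume "x \<in> ?H"
    then have "(x, y) \<in> A" using yin by blast
    then show False using tour_asym[OF T yx(3)] by simp
  qed
  have "\<not> (\<forall>h\<in>?H. (h, x) \<in> A)" using yx(2) xV xH Out_def by simp
  then have xin: "\<forall>h\<in>?H. (x, h) \<in> A" using module'[OF ab xV xH] by blast
  have ay: "(a, y) \<in> A" using yin aH by blast
  have xa: "(x, a) \<in> A" using xin aH by blast
  let ?H2 = "convex_hull IP3 V A {a, y}"
  have ayV: "{a, y} \<subseteq> V" using aV yV by simp
  have H2V: "?H2 \<subseteq> V" using hull_sub'[OF good_IP3 ayV] .
  have ayH2: "a \<in> ?H2" "y \<in> ?H2" using hull_sup[of "{a,y}" IP3 V A] by auto
  have "x \<in> IP3 V A a y" unfolding IP3_def using yx(3) xa xV tour_asym[OF T ay] by blast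
  then have xH2: "x \<in> ?H2" using hull_closed[OF ayH2] by blast
  have "?H \<subseteq> ?H2"
  proof
    fix h assume h: "h \<in> ?H"
    have "h \<in> IP3 V A x y" unfolding IP3_def using h xin yin HV tour_asym[OF T yx(3)] by blast
    then show "h \<in> ?H2" using hull_closed[OF xH2 ayH2(2)] by blast
  qed
  then have "?H \<subset> ?H2" using ayH2(2) yV(2) by blast
  moreover have "finite ?H2" using H2V tour_fin[OF T] finite_subset by blast
  ultimately have "card ?H < card ?H2" by (rule psubset_card_mono[rotated])
  then show ?thesis using ay yx(3) xa by blast
qed

lemma strong_pair: "\<exists>a b. a \<noteq> b \<and> hull_set IP3 V A {a, b} \<and> hull_set Ig V A {a, b}"
proof -
  define Pairs where "Pairs = {(a, b). \<exists>c. (a, b) \<in> A \<and> (b, c) \<in> A \<and> (c, a) \<in> A}"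
  define f where "f = (\<lambda>(a, b). card (convex_hull IP3 V A {a, b}))"
  have "Pairs \<subseteq> V \<times> V" unfolding Pairs_def using AV' by blast
  then have finP: "finite Pairs" using tour_fin[OF T] by (meson finite_SigmaI finite_subset)
  have neP: "Pairs \<noteq> {}" unfolding Pairs_def using three_cycle' by blast
  have "Max (f ` Pairs) \<in> f ` Pairs" using finP neP by simp
  then obtain a b where ab: "(a, b) \<in> Pairs" "f (a, b) = Max (f ` Pairs)" by auto
  then obtain c where abc: "(a, b) \<in> A" "(b, c) \<in> A" "(c, a) \<in> A" unfolding Pairs_def by blast
  have HV: "convex_hull IP3 V A {a, b} = V"
  proof (rule ccontr)
    assume "convex_hull IP3 V A {a, b} \<noteq> V"
    then obtain y x where yx: "(a, y) \<in> A" "(y, x) \<in> A" "(x, a) \<in> A"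
      "card (convex_hull IP3 V A {a, b}) < card (convex_hull IP3 V A {a, y})"
      using escape[OF abc] by blast
    then have "(a, y) \<in> Pairs" unfolding Pairs_def by blast
    then have "f (a, y) \<le> Max (f ` Pairs)" using finP by simp
    then show False using ab(2) yx(4) unfolding f_def by simp
  qed
  have abV: "{a, b} \<subseteq> V" using AV' abc by blast
  have neq: "a \<noteq> b" using abc tour_irr[OF T] by auto
  have h1: "hull_set IP3 V A {a, b}" unfolding hull_set_def using HV abV by simp
  let ?C = "convex_hull Ig V A {a, b}"
  have cC: "convex Ig V A ?C" using hull_convex[OF good_Ig abV] .
  have CV: "?C \<subseteq> V" using cC unfolding convex_def by blast
  have "Iset IP3 V A ?C \<subseteq> Iset Ig V A ?C"
    unfolding Iset_def using IP3_sub_Ig[OF T] CV by blast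
  then have cC2: "convex IP3 V A ?C" using cC Iset_sup[OF good_IP3 CV] unfolding convex_def by blast
  have "{a, b} \<subseteq> ?C" by (rule hull_sup)
  then have "convex_hull IP3 V A {a, b} \<subseteq> ?C" by (rule hull_least[OF cC2])
  then have "?C = V" using HV CV by blast
  then have h2: "hull_set Ig V A {a, b}" unfolding hull_set_def using abV by simp
  show ?thesis using neq h1 h2 by blast
qed

lemma strong_hn: "hull_number IP3 V A = 2 \<and> hull_number Ig V A = 2"
proof -
  obtain a b where ab: "a \<noteq> b" "hull_set IP3 V A {a, b}" "hull_set Ig V A {a, b}"
    using strong_pair by blast
  have fin: "finite V" using tour_fin[OF T] .
  have s1: "\<forall>u\<in>V. IP3 V A u u = {u}" using IP3_self[OF T] by blast
  have s2: "\<forall>u\<in>V. Ig V A u u = {u}" by (simp add: Ig_self)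
  show ?thesis using hull_number_two[OF good_IP3 s1 fin c2 ab(2,1)]
      hull_number_two[OF good_Ig s2 fin c2 ab(3,1)] by simp
qed

end



lemma sub_tournament:
  assumes "tournament V A" "D \<subseteq> V" shows "tournament D (induced_arcs A D)"
proof -
  have "finite D" using assms tour_fin finite_subset by blast
  moreover have "induced_arcs A D \<subseteq> D \<times> D" unfolding induced_arcs_def by blast
  moreover have "\<forall>v. (v, v) \<notin> induced_arcs A D" using tour_irr[OF assms(1)] unfolding induced_arcs_def by blast
  moreover have "\<forall>u\<in>D. \<forall>v\<in>D. u \<noteq> v \<longrightarrow> ((u, v) \<in> induced_arcs A D \<longleftrightarrow> (v, u) \<notin> induced_arcs A D)"
    using assms unfolding tournament_def induced_arcs_def by blast
  ultimately show ?thesis unfolding tournament_def by blast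
qed

lemma comp_sc: "strongly_connected (scc A c) (induced_arcs A (scc A c))"
  using comp_strong[of A c] unfolding strongly_connected_def ind_ind .

lemma Ext_eq:
  assumes T: "tournament V A"
  shows "Ext V A = \<Union>{D \<in> scc A ` V. card D = 1}"
proof
  show "Ext V A \<subseteq> \<Union>{D \<in> scc A ` V. card D = 1}"
  proof
    fix v assume ve: "v \<in> Ext V A"
    then have v: "v \<in> V" unfolding Ext_def by blast
    let ?D = "scc A v"
    have DV: "?D \<subseteq> V" using comp_sub[OF tour_sub[OF T] v] .
    have fD: "finite ?D" using DV tour_fin[OF T] finite_subset by blast
    have vD: "v \<in> ?D" by (rule comp_self)
    have "card ?D = 1"
    proof (rule ccontr)
      assume "card ?D \<noteq> 1"
      moreover have "card ?D > 0" using fD vD card_gt_0_iff by blast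
      ultimately have "card ?D \<ge> 2" by simp
      have "card (?D - {v}) = card ?D - 1" using vD fD by (simp add: card_Diff_singleton)
      then have "card (?D - {v}) > 0" using \<open>card ?D \<ge> 2\<close> by simp
      then have "?D - {v} \<noteq> {}" by (metis card.empty less_irrefl)
      then obtain x where x: "x \<in> ?D" "x \<noteq> v" by blast
      let ?R = "induced_arcs A ?D"
      have rc: "\<And>y z. y \<in> ?D \<Longrightarrow> z \<in> ?D \<Longrightarrow> (y, z) \<in> ?R\<^sup>*"
        using comp_induced by metis
      obtain p q where "p \<in> {v}" "q \<notin> {v}" "(p, q) \<in> ?R"
        using exit_lemma[OF rc[OF vD x(1)], of "{v}"] x by auto
      then have vq: "(v, q) \<in> A" "q \<in> ?D" unfolding induced_arcs_def by auto
      define Ov where "Ov = {w. (v, w) \<in> A}"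
      have "q \<in> Ov" "v \<notin> Ov" using vq tour_irr[OF T] unfolding Ov_def by auto
      then obtain p' q' where pq: "p' \<in> Ov" "q' \<notin> Ov" "(p', q') \<in> ?R"
        using exit_lemma[OF rc[OF vq(2) vD], of Ov] by blast
      have pq': "(p', q') \<in> A" "q' \<in> ?D" "p' \<in> ?D" using pq(3) unfolding induced_arcs_def by auto
      have vp: "(v, p') \<in> A" using pq Ov_def by simp
      have "q' \<noteq> v" using tour_asym[OF T vp] pq' by auto
      moreover have "(v, q') \<notin> A" using pq(2) Ov_def by simp
      ultimately have qv: "(q', v) \<in> A" using tour_total[OF T v, of q'] pq' DV by blast
      have "(q', p') \<notin> A" using tour_asym[OF T pq'(1)] .
      then have "\<not> is_transitive_vertex V A v" unfolding is_transitive_vertex_def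
        using qv vp pq' DV by blast
      moreover have "\<not> is_source V A v" unfolding is_source_def using qv pq' DV by blast
      moreover have "\<not> is_sink V A v" unfolding is_sink_def using vp pq' DV by blast
      ultimately show False using ve unfolding Ext_def by blast
    qed
    then show "v \<in> \<Union>{D \<in> scc A ` V. card D = 1}" using v vD by blast
  qed
next
  show "\<Union>{D \<in> scc A ` V. card D = 1} \<subseteq> Ext V A"
  proof
    fix v assume "v \<in> \<Union>{D \<in> scc A ` V. card D = 1}"
    then obtain c where c: "c \<in> V" "v \<in> scc A c" "card (scc A c) = 1" by blast
    have e: "scc A v = scc A c" using comp_eq[OF c(2)] .
    obtain s where "scc A v = {s}" using c(3) e by (metis card_1_singletonE)
    then have single: "scc A v = {v}" using comp_self[of v A] by simp
    have v: "v \<in> V" using comp_sub[OF tour_sub[OF T] c(1)] c(2) by blast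
    have "is_transitive_vertex V A v" unfolding is_transitive_vertex_def
    proof (intro ballI impI)
      fix u w assume uw: "u \<in> V" "w \<in> V" "(u, v) \<in> A \<and> (v, w) \<in> A"
      show "(u, w) \<in> A"
      proof (rule ccontr)
        assume nuw: "(u, w) \<notin> A"
        have "u \<noteq> w" using uw tour_asym[OF T] by blast
        then have wu: "(w, u) \<in> A" using tour_total[OF T uw(1,2)] nuw by blast
        have "(v, w) \<in> A\<^sup>*" "(w, v) \<in> A\<^sup>*" using uw wu by auto
        then have "w \<in> scc A v" unfolding scc_def by simp
        then have "w = v" using single by simp
        then show False using uw tour_irr[OF T] by auto
      qed
    qed
    then show "v \<in> Ext V A" unfolding Ext_def using v by blast
  qed
qed

lemma hn_comp:
  assumes T: "tournament V A" and D: "D \<in> scc A ` V" and I: "I = Ig \<or> I = IP3"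
  shows "hull_number I D (induced_arcs A D) = (if card D = 1 then 1 else 2)"
proof -
  obtain c where c: "c \<in> V" "D = scc A c" using D by blast
  have DV: "D \<subseteq> V" using comp_sub[OF tour_sub[OF T] c(1)] c(2) by simp
  have fD: "finite D" using DV tour_fin[OF T] finite_subset by blast
  have cD: "c \<in> D" using c comp_self by metis
  have g: "good I D (induced_arcs A D)" using I good_Ig good_IP3 by metis
  show ?thesis
  proof (cases "card D = 1")
    case True
    then obtain v where "D = {v}" by (rule card_1_singletonE)
    then show ?thesis using hull_number_single[of I v] g True by simp
  next
    case False
    have "card D > 0" using fD cD card_gt_0_iff by blast
    then have c2: "card D \<ge> 2" using False by simp
    have TD: "tournament D (induced_arcs A D)" using sub_tournament[OF T DV] .
    have SD: "strongly_connected D (induced_arcs A D)" using comp_sc c(2) by metis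
    show ?thesis using strong_hn[OF TD SD c2] I False by auto
  qed
qed

lemma sum_split:
  assumes fin: "finite F" and ge: "\<forall>D\<in>F. card D \<ge> 1"
  shows "(\<Sum>D\<in>F. (if card D = 1 then 1 else 2 :: nat)) =
     card {D\<in>F. card D = 1} + 2 * card {D\<in>F. card D > 1}"
proof -
  have "(\<Sum>D\<in>F. (if card D = 1 then 1 else 2 :: nat)) =
      (\<Sum>D\<in>F \<inter> {D. card D = 1}. 1) + (\<Sum>D\<in>F \<inter> - {D. card D = 1}. 2)"
    by (rule sum.If_cases[OF fin])
  moreover have "F \<inter> {D. card D = 1} = {D\<in>F. card D = 1}" by blast
  moreover have "F \<inter> - {D. card D = 1} = {D\<in>F. card D > 1}" using ge by force
  ultimately show ?thesis by simp
qed

theorem proposition6: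
  fixes V :: "'a set" and A :: "('a \<times> 'a) set" and I :: "'a intfun"
  assumes "tournament V A"
    and "V \<noteq> {}"
    and "I = Ig \<or> I = IP3"
  shows "interval_number I V A =
           (\<Sum>D\<in>strong_components V A. interval_number I D (induced_arcs A D))
       \<and> hull_number I V A =
           (\<Sum>D\<in>strong_components V A. hull_number I D (induced_arcs A D))
       \<and> hull_number IP3 V A = card (Ext V A) + 2 * card {D\<in>strong_components V A. card D > 1}
       \<and> hull_number Ig V A = card (Ext V A) + 2 * card {D\<in>strong_components V A. card D > 1}"
proof -
  note T = assms(1)
  have SCe: "strong_components V A = scc A ` V" using strong_components_eq[OF tour_sub[OF T]] .
  have finF: "finite (scc A ` V)" using tour_fin[OF T] by simp
  have ge: "\<forall>D\<in>scc A ` V. card D \<ge> 1"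
  proof
    fix D assume D: "D \<in> scc A ` V"
    then obtain c where c: "c \<in> V" "D = scc A c" by blast
    have DV: "D \<subseteq> V" using comp_sub[OF tour_sub[OF T] c(1)] c(2) by simp
    have fD: "finite D" using DV tour_fin[OF T] finite_subset by blast
    have cD: "c \<in> D" using c comp_self by metis
    have "card D > 0" using fD cD card_gt_0_iff by blast
    then show "card D \<ge> 1" by simp
  qed
  have cExt: "card (Ext V A) = card {D\<in>scc A ` V. card D = 1}"
  proof -
    have "card (Ext V A) = sum card {D\<in>scc A ` V. card D = 1}"
      unfolding Ext_eq[OF T]
    proof (rule card_Union_disjoint)
      show "pairwise disjnt {D \<in> scc A ` V. card D = 1}"
        unfolding pairwise_def disjnt_def using F_disj[OF T] by blast
      fix X assume "X \<in> {D \<in> scc A ` V. card D = 1}"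
      then have "card X = 1" by blast
      then show "finite X" by (intro card_ge_0_finite) simp
    qed
    also have "\<dots> = card {D\<in>scc A ` V. card D = 1}" by simp
    finally show ?thesis .
  qed
  have hX: "hull_number J V A = card (Ext V A) + 2 * card {D\<in>strong_components V A. card D > 1}"
    if J: "J = Ig \<or> J = IP3" for J
  proof -
    have "hull_number J V A = (\<Sum>D\<in>scc A ` V. hull_number J D (induced_arcs A D))"
      using hull_additive[OF T J] .
    also have "\<dots> = (\<Sum>D\<in>scc A ` V. (if card D = 1 then 1 else 2 :: nat))"
      using hn_comp[OF T _ J] by (intro sum.cong) auto
    also have "\<dots> = card {D\<in>scc A ` V. card D = 1} + 2 * card {D\<in>scc A ` V. card D > 1}"
      by (rule sum_split[OF finF ge])
    finally show ?thesis using cExt SCe by simp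
  qed
  show ?thesis
    unfolding SCe
    using interval_additive[OF T assms(3)] hull_additive[OF T assms(3)] hX[of IP3] hX[of Ig]
    unfolding SCe by simp
qed


end
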